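(* For $n=2,3,\dots$ let $\Omega_n=\{1,\dots,n\}$, $\mathcal P_n=\mathcal P(\Omega_n)$, and $g_n$ the Fisher co-metric on $\mathcal P_n$. Let $\{h_n\}_{n\ge2}$ be given, where $h_n$ is a contravariant tensor field of degree 2 on $\mathcal P_n$ mapping each $p\in\mathcal P_n$ continuously to a bilinear form $h_{n,p}:T_p^*(\mathcal P_n)^2\to\mathbb R$ (not assumed symmetric or positive). The following are equivalent: (i) there is $c\in\mathbb R$ with $h_n=c\,g_n$ for all $n$; (ii) for all $m\le n$ and every Markov co-embedding $\Psi:\mathcal P_n\to\mathcal P_m$, $$h_{m,\Psi(q)}(\alpha,\beta)=h_{n,q}(\Psi_q^*\alpha,\Psi_q^*\beta)\quad\forall q\in\mathcal P_n,\ \forall\alpha,\beta\in T^*_{\Psi(q)}(\mathcal P_m).$$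
   Context: $\mathcal P(\Omega)$ is the manifold of strictly positive probability distributions on a finite set $\Omega$. The Fisher co-metric is the inner product on $T^*_p(\mathcal P(\Omega))$ with $g_p((d\langle A\rangle)_p,(d\langle B\rangle)_p)=\mathrm{Cov}_p(A,B)$ for $A,B\in\mathbb R^\Omega$, where $\langle A\rangle(p)=\sum_\omega p(\omega)A(\omega)$ (every covector is of this form). A Markov map $\mathcal P(\Omega_1)\to\mathcal P(\Omega_2)$ is a map $p\mapsto\sum_xW(\cdot|x)p(x)$ for a channel $W$ with $\forall y\,\exists x\,W(y|x)>0$. A Markov map $\Phi:\mathcal P_m\to\mathcal P_n$ is a Markov embedding if some Markov map $\Psi:\mathcal P_n\to\mathcal P_m$ satisfies $\Psi\circ\Phi=\mathrm{id}_{\mathcal P_m}$; a Markov map $\Psi$ admitting such a $\Phi$ is a Markov co-embedding. $\Psi^*_q$ is the transpose of $(d\Psi)_q$. *)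

theory Defs
  imports "HOL-Analysis.Analysis"
begin

definition Omega :: "nat \<Rightarrow> nat set" where
  "Omega n = {1..n}"

definition Pn :: "nat \<Rightarrow> (nat \<Rightarrow> real) set" where
  "Pn n = {p. (\<forall>x\<in>Omega n. 0 < p x) \<and> (\<Sum>x\<in>Omega n. p x) = 1 \<and> (\<forall>x. x \<notin> Omega n \<longrightarrow> p x = 0)}"

text \<open>Covectors at p: every covector is (d<A>)_p for a random variable A : \<Omega>_n -> R,
  represented here by A :: nat => real (values outside \<Omega>_n are irrelevant);
  (d<A>)_p = (d<A'>)_p iff A - A' is constant on \<Omega>_n.\<close>

definition same_covector :: "nat \<Rightarrow> (nat \<Rightarrow> real) \<Rightarrow> (nat \<Rightarrow> real) \<Rightarrow> bool" where
  "same_covector n A A' \<longleftrightarrow> (\<exists>c. \<forall>x\<in>Omega n. A x = A' x + c)"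

text \<open>Fisher co-metric: g_p(d<A>, d<B>) = Cov_p(A,B).\<close>

definition fisher :: "nat \<Rightarrow> (nat \<Rightarrow> real) \<Rightarrow> (nat \<Rightarrow> real) \<Rightarrow> (nat \<Rightarrow> real) \<Rightarrow> real" where
  "fisher n p A B = (\<Sum>x\<in>Omega n. p x * A x * B x)
      - (\<Sum>x\<in>Omega n. p x * A x) * (\<Sum>x\<in>Omega n. p x * B x)"

text \<open>A contravariant degree-2 tensor field on P_n: h n p A B is the value
  h_{n,p}((d<A>)_p, (d<B>)_p).  It must be well defined on covectors, bilinear, and
  continuous in p.\<close>

definition tensor_field2 :: "nat \<Rightarrow> (nat \<Rightarrow> (nat \<Rightarrow> real) \<Rightarrow> (nat \<Rightarrow> real) \<Rightarrow> (nat \<Rightarrow> real) \<Rightarrow> real) \<Rightarrow> bool" where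
  "tensor_field2 n h \<longleftrightarrow>
     (\<forall>p\<in>Pn n.
        (\<forall>A A' B B'. same_covector n A A' \<longrightarrow> same_covector n B B' \<longrightarrow> h n p A B = h n p A' B')
      \<and> (\<forall>A A' B. h n p (\<lambda>x. A x + A' x) B = h n p A B + h n p A' B)
      \<and> (\<forall>c A B. h n p (\<lambda>x. c * A x) B = c * h n p A B)
      \<and> (\<forall>A B B'. h n p A (\<lambda>x. B x + B' x) = h n p A B + h n p A B')
      \<and> (\<forall>c A B. h n p A (\<lambda>x. c * B x) = c * h n p A B))
   \<and> (\<forall>A B. continuous_on (Pn n) (\<lambda>p. h n p A B))"

text \<open>Channel W from \<Omega>_n to \<Omega>_m, W y x = W(y|x), with every y reachable.\<close>

definition markov_channel :: "nat \<Rightarrow> nat \<Rightarrow> (nat \<Rightarrow> nat \<Rightarrow> real) \<Rightarrow> bool" where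
  "markov_channel n m W \<longleftrightarrow>
     (\<forall>x\<in>Omega n. (\<forall>y\<in>Omega m. 0 \<le> W y x) \<and> (\<Sum>y\<in>Omega m. W y x) = 1)
   \<and> (\<forall>y\<in>Omega m. \<exists>x\<in>Omega n. 0 < W y x)"

definition markov_map :: "nat \<Rightarrow> nat \<Rightarrow> (nat \<Rightarrow> nat \<Rightarrow> real) \<Rightarrow> (nat \<Rightarrow> real) \<Rightarrow> (nat \<Rightarrow> real)" where
  "markov_map n m W p = (\<lambda>y. if y \<in> Omega m then (\<Sum>x\<in>Omega n. W y x * p x) else 0)"

definition markov_coembedding :: "nat \<Rightarrow> nat \<Rightarrow> (nat \<Rightarrow> nat \<Rightarrow> real) \<Rightarrow> bool" where
  "markov_coembedding n m W \<longleftrightarrow> markov_channel n m W \<and>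
     (\<exists>V. markov_channel m n V \<and> (\<forall>p\<in>Pn m. markov_map n m W (markov_map m n V p) = p))"

text \<open>Pullback \<Psi>*_q (d<A>)_{\<Psi>(q)} = d(<A> \<circ> \<Psi>)_q = (d<W^T A>)_q, since
  <A>(\<Psi>(q)) = \<Sum>_x q(x) \<Sum>_y W(y|x) A(y).\<close>

definition markov_pullback :: "nat \<Rightarrow> (nat \<Rightarrow> nat \<Rightarrow> real) \<Rightarrow> (nat \<Rightarrow> real) \<Rightarrow> (nat \<Rightarrow> real)" where
  "markov_pullback m W A = (\<lambda>x. \<Sum>y\<in>Omega m. W y x * A y)"

end

theory Submission
  imports Defs
begin



lemma cauchy_nat:
  fixes f :: "real \<Rightarrow> real"
  assumes add: "\<And>x y. 0<x \<Longrightarrow> 0<y \<Longrightarrow> x+y<L \<Longrightarrow> f(x+y) = f x + f y"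
  shows "n \<ge> 1 \<Longrightarrow> 0 < z \<Longrightarrow> real n * z < L \<Longrightarrow> f (real n * z) = real n * f z"
proof (induction n rule: nat_induct_at_least)
  case base then show ?case by simp
next
  case (Suc n)
  have "real (Suc n) * z = real n * z + z" by (simp add: algebra_simps)
  moreover have "real n * z < L" using Suc.prems Suc.hyps \<open>real (Suc n) * z = real n * z + z\<close>
    by linarith
  moreover have "0 < real n * z" using Suc.hyps Suc.prems by simp
  ultimately show ?case using add[of "real n * z" z] Suc by (simp add: algebra_simps)
qed

lemma cauchy:
  fixes f :: "real \<Rightarrow> real"
  assumes cont: "continuous_on {0<..<L} f"
    and add: "\<And>x y. 0<x \<Longrightarrow> 0<y \<Longrightarrow> x+y<L \<Longrightarrow> f(x+y) = f x + f y"
  shows "\<exists>k. \<forall>x\<in>{0<..<L}. f x = k*x"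
proof (cases "L > 0")
  case False then show ?thesis by auto
next
  case True
  define y0 where "y0 = L/2"
  have y0: "0 < y0" "y0 < L" using True by (auto simp: y0_def)
  define k where "k = f y0 / y0"
  have rat: "f (real p / real q * y0) = real p / real q * f y0"
    if "p \<ge> 1" "q \<ge> 1" "real p / real q * y0 < L" for p q :: nat
  proof -
    have z: "0 < y0 / real q" using that y0 by simp
    have "f y0 = f (real q * (y0 / real q))" using that by simp
    also have "\<dots> = real q * f (y0 / real q)"
      using cauchy_nat[OF add, where n=q and z="y0/real q"] that z y0 by simp
    finally have 1: "f (y0 / real q) = f y0 / real q" using that by (simp add: field_simps)
    have "f (real p / real q * y0) = f (real p * (y0 / real q))" by simp
    also have "\<dots> = real p * f (y0 / real q)"
      using cauchy_nat[OF add, where n=p and z="y0/real q"] that z by simp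
    finally show ?thesis using 1 by simp
  qed
  have "f x = k * x" if x: "x \<in> {0<..<L}" for x
  proof (rule ccontr)
    assume ne: "f x \<noteq> k * x"
    define g where "g t = f t - k * t" for t
    have gc: "continuous_on {0<..<L} g" unfolding g_def
      by (intro continuous_intros cont)
    have "\<bar>g x\<bar> > 0" using ne by (simp add: g_def)
    then obtain d where d: "d > 0" and dd: "\<And>x'. x' \<in> {0<..<L} \<Longrightarrow> dist x' x < d \<Longrightarrow> dist (g x') (g x) < \<bar>g x\<bar>"
      using gc x unfolding continuous_on_iff by metis
    define lo where "lo = max 0 (x - d)"
    define hi where "hi = min L (x + d)"
    have "lo < hi" using x d by (auto simp: lo_def hi_def)
    then have "lo / y0 < hi / y0" using y0 by (simp add: divide_strict_right_mono)
    then obtain r where r: "r \<in> \<rat>" "lo / y0 < r" "r < hi / y0" using Rats_dense_in_real by blast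
    have rpos: "r > 0" using r(2) y0 by (smt (verit, best) divide_nonneg_pos lo_def)
    have rlo: "lo < r * y0" using r(2) y0 by (simp add: field_simps)
    have rhi: "r * y0 < hi" using r(3) y0 by (simp add: field_simps)
    obtain a b :: int where ab: "b > 0" "r = of_int a / of_int b" using r(1)
      by (metis Rats_cases')
    have apos: "a > 0" using ab rpos by (smt (verit) divide_nonpos_pos of_int_le_0_iff)
    define p where "p = nat a"
    define q where "q = nat b"
    have pq: "r = real p / real q" "p \<ge> 1" "q \<ge> 1" using ab apos by (auto simp: p_def q_def)
    have xr: "r * y0 \<in> {0<..<L}" using rlo rhi by (auto simp: lo_def hi_def)
    have "g (r * y0) = 0" using rat[of p q] pq xr y0 by (simp add: g_def k_def)
    moreover have "dist (r*y0) x < d" using rlo rhi by (auto simp: lo_def hi_def dist_real_def)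
    ultimately show False using dd[OF xr] by (simp add: dist_real_def)
  qed
  then show ?thesis by blast
qed




definition ind :: "nat \<Rightarrow> nat \<Rightarrow> real" where "ind x = (\<lambda>z. if z = x then 1 else 0)"

lemma finite_Omega[simp]: "finite (Omega n)" by (simp add: Omega_def)

lemma tf_cong:
  assumes "tensor_field2 n h" "p \<in> Pn n" "\<forall>x\<in>Omega n. A x = A' x" "\<forall>x\<in>Omega n. B x = B' x"
  shows "h n p A B = h n p A' B'"
proof -
  have wd: "\<forall>A A' B B'. same_covector n A A' \<longrightarrow> same_covector n B B' \<longrightarrow> h n p A B = h n p A' B'"
    using assms(1,2) unfolding tensor_field2_def by blast
  have "same_covector n A A'" unfolding same_covector_def using assms(3) by (intro exI[of _ 0]) simp
  moreover have "same_covector n B B'" unfolding same_covector_def using assms(4) by (intro exI[of _ 0]) simp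
  ultimately show ?thesis using wd by blast
qed

lemma tf_zero1:
  assumes "tensor_field2 n h" "p \<in> Pn n"
  shows "h n p (\<lambda>z. 0) B = 0"
proof -
  have "h n p (\<lambda>x. 0 * B x) B = 0 * h n p B B" using assms unfolding tensor_field2_def by blast
  then show ?thesis by simp
qed

lemma tf_zero2:
  assumes "tensor_field2 n h" "p \<in> Pn n"
  shows "h n p A (\<lambda>z. 0) = 0"
proof -
  have "h n p A (\<lambda>x. 0 * A x) = 0 * h n p A A" using assms unfolding tensor_field2_def by blast
  then show ?thesis by simp
qed

lemma tf_const1:
  assumes "tensor_field2 n h" "p \<in> Pn n" "\<forall>x\<in>Omega n. A x = c"
  shows "h n p A B = 0"
proof -
  have wd: "\<forall>A A' B B'. same_covector n A A' \<longrightarrow> same_covector n B B' \<longrightarrow> h n p A B = h n p A' B'"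
    using assms(1,2) unfolding tensor_field2_def by blast
  have "same_covector n A (\<lambda>z. 0)" unfolding same_covector_def using assms(3) by (intro exI[of _ c]) simp
  moreover have "same_covector n B B" unfolding same_covector_def by (intro exI[of _ 0]) simp
  ultimately have "h n p A B = h n p (\<lambda>z. 0) B" using wd by blast
  then show ?thesis using tf_zero1[OF assms(1,2)] by simp
qed

lemma tf_const2:
  assumes "tensor_field2 n h" "p \<in> Pn n" "\<forall>x\<in>Omega n. B x = c"
  shows "h n p A B = 0"
proof -
  have wd: "\<forall>A A' B B'. same_covector n A A' \<longrightarrow> same_covector n B B' \<longrightarrow> h n p A B = h n p A' B'"
    using assms(1,2) unfolding tensor_field2_def by blast
  have "same_covector n B (\<lambda>z. 0)" unfolding same_covector_def using assms(3) by (intro exI[of _ c]) simp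
  moreover have "same_covector n A A" unfolding same_covector_def by (intro exI[of _ 0]) simp
  ultimately have "h n p A B = h n p A (\<lambda>z. 0)" using wd by blast
  then show ?thesis using tf_zero2[OF assms(1,2)] by simp
qed

lemma tf_sum1:
  assumes "tensor_field2 n h" "p \<in> Pn n" "finite S"
  shows "h n p (\<lambda>z. \<Sum>i\<in>S. F i z) B = (\<Sum>i\<in>S. h n p (F i) B)"
  using assms(3)
proof (induction S rule: finite_induct)
  case empty then show ?case using tf_zero1[OF assms(1,2)] by simp
next
  case (insert i S)
  have "h n p (\<lambda>z. \<Sum>i\<in>insert i S. F i z) B = h n p (\<lambda>z. F i z + (\<Sum>i\<in>S. F i z)) B"
    using insert by simp
  also have "\<dots> = h n p (F i) B + h n p (\<lambda>z. \<Sum>i\<in>S. F i z) B"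
  proof -
    have "\<forall>A A' B. h n p (\<lambda>x. A x + A' x) B = h n p A B + h n p A' B"
      using assms(1,2) unfolding tensor_field2_def by blast
    from this[rule_format, of "F i" "\<lambda>z. \<Sum>i\<in>S. F i z"] show ?thesis by simp
  qed
  finally show ?case using insert by simp
qed

lemma tf_sum2:
  assumes "tensor_field2 n h" "p \<in> Pn n" "finite S"
  shows "h n p A (\<lambda>z. \<Sum>i\<in>S. F i z) = (\<Sum>i\<in>S. h n p A (F i))"
  using assms(3)
proof (induction S rule: finite_induct)
  case empty then show ?case using tf_zero2[OF assms(1,2)] by simp
next
  case (insert i S)
  have "h n p A (\<lambda>z. \<Sum>i\<in>insert i S. F i z) = h n p A (\<lambda>z. F i z + (\<Sum>i\<in>S. F i z))"
    using insert by simp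
  also have "\<dots> = h n p A (F i) + h n p A (\<lambda>z. \<Sum>i\<in>S. F i z)"
  proof -
    have "\<forall>A B B'. h n p A (\<lambda>x. B x + B' x) = h n p A B + h n p A B'"
      using assms(1,2) unfolding tensor_field2_def by blast
    from this[rule_format, of A "F i" "\<lambda>z. \<Sum>i\<in>S. F i z"] show ?thesis by simp
  qed
  finally show ?case using insert by simp
qed

lemma tf_scale1:
  assumes "tensor_field2 n h" "p \<in> Pn n"
  shows "h n p (\<lambda>z. c * A z) B = c * h n p A B"
  using assms unfolding tensor_field2_def by blast

lemma tf_scale2:
  assumes "tensor_field2 n h" "p \<in> Pn n"
  shows "h n p A (\<lambda>z. c * B z) = c * h n p A B"
  using assms unfolding tensor_field2_def by blast

lemma ind_sum: "finite S \<Longrightarrow> z \<in> S \<Longrightarrow> (\<Sum>x\<in>S. A x * ind x z) = A z"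
proof -
  assume "finite S" "z \<in> S"
  have "(\<Sum>x\<in>S. A x * ind x z) = (\<Sum>x\<in>S. if z = x then A x else 0)"
    by (rule sum.cong) (auto simp: ind_def)
  then show ?thesis using \<open>finite S\<close> \<open>z \<in> S\<close> by simp
qed

lemma tf_expand:
  assumes "tensor_field2 n h" "p \<in> Pn n"
  shows "h n p A B = (\<Sum>x\<in>Omega n. \<Sum>y\<in>Omega n. A x * B y * h n p (ind x) (ind y))"
proof -
  have "h n p A B = h n p (\<lambda>z. \<Sum>x\<in>Omega n. A x * ind x z) (\<lambda>z. \<Sum>y\<in>Omega n. B y * ind y z)"
    by (rule tf_cong[OF assms]) (simp_all add: ind_sum)
  also have "\<dots> = (\<Sum>x\<in>Omega n. h n p (\<lambda>z. A x * ind x z) (\<lambda>z. \<Sum>y\<in>Omega n. B y * ind y z))"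
    by (rule tf_sum1[OF assms]) simp
  also have "\<dots> = (\<Sum>x\<in>Omega n. \<Sum>y\<in>Omega n. A x * B y * h n p (ind x) (ind y))"
    by (simp add: tf_scale1[OF assms] tf_scale2[OF assms] tf_sum2[OF assms] sum_distrib_left mult.assoc)
  finally show ?thesis .
qed

lemma row_sum:
  assumes "tensor_field2 n h" "p \<in> Pn n"
  shows "(\<Sum>y\<in>Omega n. h n p A (ind y)) = 0"
proof -
  have "(\<Sum>y\<in>Omega n. h n p A (ind y)) = h n p A (\<lambda>z. \<Sum>y\<in>Omega n. ind y z)"
    by (rule tf_sum2[OF assms, symmetric]) simp
  also have "\<dots> = 0" by (rule tf_const2[OF assms, where c=1]) (simp add: ind_def)
  finally show ?thesis .
qed

lemma col_sum:
  assumes "tensor_field2 n h" "p \<in> Pn n"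
  shows "(\<Sum>y\<in>Omega n. h n p (ind y) B) = 0"
proof -
  have "(\<Sum>y\<in>Omega n. h n p (ind y) B) = h n p (\<lambda>z. \<Sum>y\<in>Omega n. ind y z) B"
    by (rule tf_sum1[OF assms, symmetric]) simp
  also have "\<dots> = 0" by (rule tf_const1[OF assms, where c=1]) (simp add: ind_def)
  finally show ?thesis .
qed




definition Wg :: "(nat \<Rightarrow> nat) \<Rightarrow> nat \<Rightarrow> nat \<Rightarrow> real" where
  "Wg g = (\<lambda>y x. if g x = y then 1 else 0)"

lemma sum_if_eq: "finite S \<Longrightarrow> (\<Sum>x\<in>S. (if g x = y then 1 else 0) * F x) = (\<Sum>x\<in>{x\<in>S. g x = y}. (F x::real))"
proof -
  assume "finite S"
  have "(\<Sum>x\<in>S. (if g x = y then 1 else 0) * F x) = (\<Sum>x\<in>S. if g x = y then F x else 0)"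
    by (rule sum.cong) auto
  then show ?thesis using \<open>finite S\<close> by (simp add: sum.inter_filter)
qed

lemma coemb:
  assumes img: "g ` Omega n = Omega m"
  shows "markov_coembedding n m (Wg g)"
proof -
  define F where "F y = {x\<in>Omega n. g x = y}" for y
  have Fne: "card (F y) > 0" if "y \<in> Omega m" for y
  proof -
    have "y \<in> g ` Omega n" using img that by simp
    then obtain x where "x \<in> Omega n" "g x = y" by blast
    then have "F y \<noteq> {}" by (auto simp: F_def)
    then show ?thesis by (simp add: F_def card_gt_0_iff)
  qed
  define V where "V = (\<lambda>x y. if g x = y then 1 / real (card (F y)) else 0)"
  have a1: "\<forall>x\<in>Omega n. (\<forall>y\<in>Omega m. 0 \<le> Wg g y x) \<and> (\<Sum>y\<in>Omega m. Wg g y x) = 1"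
  proof
    fix x assume x: "x \<in> Omega n"
    then have gx: "g x \<in> Omega m" using img by blast
    have "(\<Sum>y\<in>Omega m. Wg g y x) = (\<Sum>y\<in>Omega m. if g x = y then 1 else 0)" by (simp add: Wg_def)
    also have "\<dots> = 1" using gx by (simp add: sum.delta)
    finally show "(\<forall>y\<in>Omega m. 0 \<le> Wg g y x) \<and> (\<Sum>y\<in>Omega m. Wg g y x) = 1"
      by (simp add: Wg_def)
  qed
  have a2: "\<forall>y\<in>Omega m. \<exists>x\<in>Omega n. 0 < Wg g y x"
  proof
    fix y assume "y \<in> Omega m"
    then have "y \<in> g ` Omega n" using img by simp
    then obtain x where "x \<in> Omega n" "g x = y" by blast
    then show "\<exists>x\<in>Omega n. 0 < Wg g y x" by (auto simp: Wg_def)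
  qed
  have ch1: "markov_channel n m (Wg g)" unfolding markov_channel_def using a1 a2 by blast
  have b1: "\<forall>y\<in>Omega m. (\<forall>x\<in>Omega n. 0 \<le> V x y) \<and> (\<Sum>x\<in>Omega n. V x y) = 1"
  proof
    fix y assume y: "y \<in> Omega m"
    have "(\<Sum>x\<in>Omega n. V x y) = (\<Sum>x\<in>Omega n. (if g x = y then 1 else 0) * (1 / real (card (F y))))"
      by (rule sum.cong) (auto simp: V_def)
    also have "\<dots> = (\<Sum>x\<in>F y. 1 / real (card (F y)))" unfolding F_def by (rule sum_if_eq) simp
    also have "\<dots> = 1" using Fne[OF y] by simp
    finally show "(\<forall>x\<in>Omega n. 0 \<le> V x y) \<and> (\<Sum>x\<in>Omega n. V x y) = 1" by (simp add: V_def)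
  qed
  have b2: "\<forall>x\<in>Omega n. \<exists>y\<in>Omega m. 0 < V x y"
  proof
    fix x assume x: "x \<in> Omega n"
    then have gx: "g x \<in> Omega m" using img by blast
    have "0 < V x (g x)" using Fne[OF gx] by (simp add: V_def)
    then show "\<exists>y\<in>Omega m. 0 < V x y" using gx by blast
  qed
  have ch2: "markov_channel m n V" unfolding markov_channel_def using b1 b2 by blast
  have comp: "markov_map n m (Wg g) (markov_map m n V p) = p" if p: "p \<in> Pn m" for p
  proof
    fix y
    show "markov_map n m (Wg g) (markov_map m n V p) y = p y"
    proof (cases "y \<in> Omega m")
      case False then show ?thesis using p by (simp add: markov_map_def Pn_def)
    next
      case y: True
      have inner: "markov_map m n V p x = p (g x) / real (card (F (g x)))" if x: "x \<in> Omega n" for x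
      proof -
        have gx: "g x \<in> Omega m" using img x by blast
        have "(\<Sum>y'\<in>Omega m. V x y' * p y') = (\<Sum>y'\<in>Omega m. if g x = y' then p y' / real (card (F y')) else 0)"
          by (rule sum.cong) (auto simp: V_def)
        also have "\<dots> = p (g x) / real (card (F (g x)))" using gx by (simp add: sum.delta)
        finally show ?thesis using x by (simp add: markov_map_def)
      qed
      have "markov_map n m (Wg g) (markov_map m n V p) y
          = (\<Sum>x\<in>Omega n. Wg g y x * markov_map m n V p x)" using y by (simp add: markov_map_def)
      also have "\<dots> = (\<Sum>x\<in>Omega n. (if g x = y then 1 else 0) * (p y / real (card (F y))))"
        by (rule sum.cong) (auto simp: Wg_def inner)
      also have "\<dots> = (\<Sum>x\<in>F y. p y / real (card (F y)))" unfolding F_def by (rule sum_if_eq) simp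
      also have "\<dots> = p y" using Fne[OF y] by simp
      finally show ?thesis .
    qed
  qed
  show ?thesis unfolding markov_coembedding_def using ch1 ch2 comp by blast
qed

lemma pullback_Wg:
  assumes "g ` Omega n = Omega m" "x \<in> Omega n"
  shows "markov_pullback m (Wg g) A x = A (g x)"
proof -
  have gx: "g x \<in> Omega m" using assms by blast
  have "markov_pullback m (Wg g) A x = (\<Sum>y\<in>Omega m. if g x = y then A y else 0)"
    unfolding markov_pullback_def by (rule sum.cong) (auto simp: Wg_def)
  then show ?thesis using gx by (simp add: sum.delta)
qed

lemma pushforward_Wg:
  "markov_map n m (Wg g) q = (\<lambda>y. if y \<in> Omega m then (\<Sum>x\<in>{x\<in>Omega n. g x = y}. q x) else 0)"
proof
  fix y
  show "markov_map n m (Wg g) q y = (if y \<in> Omega m then (\<Sum>x\<in>{x\<in>Omega n. g x = y}. q x) else 0)"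
    unfolding markov_map_def Wg_def using sum_if_eq[of "Omega n" g y q] by simp
qed

lemma merge:
  assumes inv: "\<forall>m n W. 2 \<le> m \<longrightarrow> m \<le> n \<longrightarrow> markov_coembedding n m W \<longrightarrow>
        (\<forall>q\<in>Pn n. \<forall>A B.
           h m (markov_map n m W q) A B = h n q (markov_pullback m W A) (markov_pullback m W B))"
    and tf: "tensor_field2 n h"
    and img: "g ` Omega n = Omega m" and mn: "2 \<le> m" "m \<le> n" and q: "q \<in> Pn n"
  shows "h m (\<lambda>y. if y \<in> Omega m then (\<Sum>x\<in>{x\<in>Omega n. g x = y}. q x) else 0) A B
       = h n q (\<lambda>x. A (g x)) (\<lambda>x. B (g x))"
proof -
  have "h m (markov_map n m (Wg g) q) A B = h n q (markov_pullback m (Wg g) A) (markov_pullback m (Wg g) B)"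
    using inv mn coemb[OF img] q by blast
  also have "\<dots> = h n q (\<lambda>x. A (g x)) (\<lambda>x. B (g x))"
    by (rule tf_cong[OF tf q]) (simp_all add: pullback_Wg[OF img])
  finally show ?thesis by (simp add: pushforward_Wg)
qed




definition P2 :: "real \<Rightarrow> nat \<Rightarrow> real" where
  "P2 t = (\<lambda>z. if z = 1 then t else if z = 2 then 1 - t else 0)"
definition P3 :: "real \<Rightarrow> real \<Rightarrow> nat \<Rightarrow> real" where
  "P3 a b = (\<lambda>z. if z = 1 then a else if z = 2 then b else if z = 3 then 1 - a - b else 0)"
definition Q4 :: "real \<Rightarrow> real \<Rightarrow> real \<Rightarrow> real \<Rightarrow> nat \<Rightarrow> real" where
  "Q4 a b c d = (\<lambda>z. if z = 1 then a else if z = 2 then b else if z = 3 then c else if z = 4 then d else 0)"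

lemma Omega2: "Omega 2 = {1,2}" by (auto simp: Omega_def)
lemma Omega3: "Omega 3 = {1,2,3}" by (auto simp: Omega_def)
lemma Omega4: "Omega 4 = {1,2,3,4}" by (auto simp: Omega_def)

lemma P2_in: "0 < t \<Longrightarrow> t < 1 \<Longrightarrow> P2 t \<in> Pn 2"
  by (auto simp: Pn_def Omega2 P2_def)
lemma P3_in: "0 < a \<Longrightarrow> 0 < b \<Longrightarrow> a + b < 1 \<Longrightarrow> P3 a b \<in> Pn 3"
  by (auto simp: Pn_def Omega3 P3_def)
lemma Q4_in: "0 < a \<Longrightarrow> 0 < b \<Longrightarrow> 0 < c \<Longrightarrow> 0 < d \<Longrightarrow> a + b + c + d = 1 \<Longrightarrow> Q4 a b c d \<in> Pn 4"
  by (auto simp: Pn_def Omega4 Q4_def)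

lemma sum_minus1: "finite S \<Longrightarrow> x \<in> S \<Longrightarrow> (\<Sum>z\<in>{z\<in>S. z \<noteq> x}. (q z::real)) = sum q S - q x"
proof -
  assume a: "finite S" "x \<in> S"
  have "{z\<in>S. z \<noteq> x} = S - {x}" by auto
  then show ?thesis using a by (simp add: sum_diff1)
qed

lemma sum_minus2: "finite S \<Longrightarrow> x \<in> S \<Longrightarrow> y \<in> S \<Longrightarrow> x \<noteq> y \<Longrightarrow>
   (\<Sum>z\<in>{z\<in>S. z \<noteq> x \<and> z \<noteq> y}. (q z::real)) = sum q S - q x - q y"
proof -
  assume a: "finite S" "x \<in> S" "y \<in> S" "x \<noteq> y"
  have "{z\<in>S. z \<noteq> x \<and> z \<noteq> y} = {z\<in>{z\<in>S. z \<noteq> x}. z \<noteq> y}" by auto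
  then show ?thesis using a sum_minus1[of S x q] sum_minus1[of "{z\<in>S. z \<noteq> x}" y q] by simp
qed

context
  fixes h :: "nat \<Rightarrow> (nat \<Rightarrow> real) \<Rightarrow> (nat \<Rightarrow> real) \<Rightarrow> (nat \<Rightarrow> real) \<Rightarrow> real"
  assumes tf: "\<forall>n\<ge>2. tensor_field2 n h"
    and inv: "\<forall>m n W. 2 \<le> m \<longrightarrow> m \<le> n \<longrightarrow> markov_coembedding n m W \<longrightarrow>
        (\<forall>q\<in>Pn n. \<forall>A B.
           h m (markov_map n m W q) A B = h n q (markov_pullback m W A) (markov_pullback m W B))"
begin


lemma other_elem: "2 \<le> n \<Longrightarrow> x \<in> Omega n \<Longrightarrow> \<exists>w\<in>Omega n. w \<noteq> x"
proof -
  assume n: "2 \<le> n"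
  have "(2::nat) \<in> Omega n" "(1::nat) \<in> Omega n" using n by (auto simp: Omega_def)
  moreover have "(2::nat) \<noteq> 1" by simp
  ultimately show ?thesis by metis
qed

lemma other_elem2: "3 \<le> n \<Longrightarrow> x \<in> Omega n \<Longrightarrow> y \<in> Omega n \<Longrightarrow> \<exists>w\<in>Omega n. w \<noteq> x \<and> w \<noteq> y"
proof -
  assume a: "3 \<le> n" "x \<in> Omega n" "y \<in> Omega n"
  have "card {x,y} \<le> 2" by (simp add: card_insert_le_m1)
  then have "card (Omega n - {x,y}) > 0" using a
    by (simp add: Omega_def card_Diff_subset)
  then obtain w where "w \<in> Omega n - {x,y}"
    by (metis card_gt_0_iff ex_in_conv)
  then show ?thesis by blast
qed

definition phiF :: "real \<Rightarrow> real" where "phiF t = h 2 (P2 t) (ind 1) (ind 1)"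
definition ThF :: "real \<Rightarrow> real \<Rightarrow> real" where "ThF a b = h 3 (P3 a b) (ind 1) (ind 2)"

lemma M2:
  assumes n: "2 \<le> n" and q: "q \<in> Pn n" and x: "x \<in> Omega n"
  shows "h n q (ind x) (ind x) = phiF (q x)"
proof -
  define g where "g z = (if z = x then 1 else 2::nat)" for z
  obtain w where w: "w \<in> Omega n" "w \<noteq> x" using other_elem[OF n x] by blast
  have img: "g ` Omega n = Omega 2"
  proof
    show "g ` Omega n \<subseteq> Omega 2" by (auto simp: g_def Omega2)
    have "g x = 1" "g w = 2" using w by (auto simp: g_def)
    then have "1 \<in> g ` Omega n" "2 \<in> g ` Omega n" using x w by (metis imageI)+
    then show "Omega 2 \<subseteq> g ` Omega n" by (simp add: Omega2)
  qed
  have sq: "sum q (Omega n) = 1" using q by (simp add: Pn_def)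
  have s1: "{z\<in>Omega n. g z = 1} = {x}" using x by (auto simp: g_def)
  have s2: "{z\<in>Omega n. g z = 2} = {z\<in>Omega n. z \<noteq> x}" by (auto simp: g_def)
  have push: "(\<lambda>y. if y \<in> Omega 2 then (\<Sum>z\<in>{z\<in>Omega n. g z = y}. q z) else 0) = P2 (q x)"
  proof
    fix y :: nat
    consider "y = 1" | "y = 2" | "y \<noteq> 1 \<and> y \<noteq> 2" by blast
    then show "(if y \<in> Omega 2 then (\<Sum>z\<in>{z\<in>Omega n. g z = y}. q z) else 0) = P2 (q x) y"
    proof cases
      case 1 then show ?thesis using s1 by (simp add: Omega2 P2_def)
    next
      case 2 then show ?thesis using s2 sum_minus1[of "Omega n" x q] x sq by (simp add: Omega2 P2_def)
    next
      case 3 then show ?thesis by (simp add: Omega2 P2_def)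
    qed
  qed
  have "h 2 (P2 (q x)) (ind 1) (ind 1) = h n q (\<lambda>z. ind 1 (g z)) (\<lambda>z. ind 1 (g z))"
    using merge[OF inv tf[rule_format, OF n] img _ n q] push by simp
  also have "(\<lambda>z. ind 1 (g z)) = ind x" by (auto simp: ind_def g_def)
  finally show ?thesis by (simp add: phiF_def)
qed

lemma M3:
  assumes n: "3 \<le> n" and q: "q \<in> Pn n" and x: "x \<in> Omega n" and y: "y \<in> Omega n" and xy: "x \<noteq> y"
  shows "h n q (ind x) (ind y) = ThF (q x) (q y)"
proof -
  define g where "g z = (if z = x then 1 else if z = y then 2 else 3::nat)" for z
  obtain w where w: "w \<in> Omega n" "w \<noteq> x" "w \<noteq> y" using other_elem2[OF n x y] by blast
  have img: "g ` Omega n = Omega 3"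
  proof
    show "g ` Omega n \<subseteq> Omega 3" by (auto simp: g_def Omega3)
    have "g x = 1" "g y = 2" "g w = 3" using w xy by (auto simp: g_def)
    then have "1 \<in> g ` Omega n" "2 \<in> g ` Omega n" "3 \<in> g ` Omega n" using x y w by (metis imageI)+
    then show "Omega 3 \<subseteq> g ` Omega n" by (simp add: Omega3)
  qed
  have sq: "sum q (Omega n) = 1" using q by (simp add: Pn_def)
  have s1: "{z\<in>Omega n. g z = 1} = {x}" using x by (auto simp: g_def)
  have s2: "{z\<in>Omega n. g z = 2} = {y}" using y xy by (auto simp: g_def)
  have s3: "{z\<in>Omega n. g z = 3} = {z\<in>Omega n. z \<noteq> x \<and> z \<noteq> y}" by (auto simp: g_def)
  have push: "(\<lambda>y'. if y' \<in> Omega 3 then (\<Sum>z\<in>{z\<in>Omega n. g z = y'}. q z) else 0) = P3 (q x) (q y)"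
  proof
    fix y' :: nat
    consider "y' = 1" | "y' = 2" | "y' = 3" | "y' \<noteq> 1 \<and> y' \<noteq> 2 \<and> y' \<noteq> 3" by blast
    then show "(if y' \<in> Omega 3 then (\<Sum>z\<in>{z\<in>Omega n. g z = y'}. q z) else 0) = P3 (q x) (q y) y'"
    proof cases
      case 1 then show ?thesis using s1 by (simp add: Omega3 P3_def)
    next
      case 2 then show ?thesis using s2 by (simp add: Omega3 P3_def)
    next
      case 3 then show ?thesis using s3 sum_minus2[of "Omega n" x y q] x y xy sq by (simp add: Omega3 P3_def)
    next
      case 4 then show ?thesis by (simp add: Omega3 P3_def)
    qed
  qed
  have "h 3 (P3 (q x) (q y)) (ind 1) (ind 2) = h n q (\<lambda>z. ind 1 (g z)) (\<lambda>z. ind 2 (g z))"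
    using merge[OF inv tf[rule_format] img _ n q] push n by simp
  also have "(\<lambda>z. ind 1 (g z)) = ind x" by (auto simp: ind_def g_def)
  also have "(\<lambda>z. ind 2 (g z)) = ind y" using xy by (auto simp: ind_def g_def)
  finally show ?thesis by (simp add: ThF_def)
qed

lemma R3:
  assumes a: "0 < a" and b: "0 < b" and ab: "a + b < 1"
  shows "phiF a + ThF a b + ThF a (1 - a - b) = 0"
proof -
  have q: "P3 a b \<in> Pn 3" using P3_in a b ab by blast
  have tf3: "tensor_field2 3 h" using tf by simp
  have "(\<Sum>y\<in>Omega 3. h 3 (P3 a b) (ind 1) (ind y)) = 0" by (rule row_sum[OF tf3 q])
  moreover have "h 3 (P3 a b) (ind 1) (ind 1) = phiF a" using M2[of 3 "P3 a b" 1] q by (simp add: Omega3 P3_def)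
  moreover have "h 3 (P3 a b) (ind 1) (ind 2) = ThF a b" using M3[of 3 "P3 a b" 1 2] q by (simp add: Omega3 P3_def)
  moreover have "h 3 (P3 a b) (ind 1) (ind 3) = ThF a (1 - a - b)" using M3[of 3 "P3 a b" 1 3] q by (simp add: Omega3 P3_def)
  ultimately show ?thesis by (simp add: Omega3 algebra_simps)
qed

lemma C3:
  assumes a: "0 < a" and b: "0 < b" and ab: "a + b < 1"
  shows "phiF a + ThF b a + ThF (1 - a - b) a = 0"
proof -
  have q: "P3 a b \<in> Pn 3" using P3_in a b ab by blast
  have tf3: "tensor_field2 3 h" using tf by simp
  have "(\<Sum>y\<in>Omega 3. h 3 (P3 a b) (ind y) (ind 1)) = 0" by (rule col_sum[OF tf3 q])
  moreover have "h 3 (P3 a b) (ind 1) (ind 1) = phiF a" using M2[of 3 "P3 a b" 1] q by (simp add: Omega3 P3_def)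
  moreover have "h 3 (P3 a b) (ind 2) (ind 1) = ThF b a" using M3[of 3 "P3 a b" 2 1] q by (simp add: Omega3 P3_def)
  moreover have "h 3 (P3 a b) (ind 3) (ind 1) = ThF (1 - a - b) a" using M3[of 3 "P3 a b" 3 1] q by (simp add: Omega3 P3_def)
  ultimately show ?thesis by (simp add: Omega3 algebra_simps)
qed

lemma R4:
  assumes "0 < a" "0 < b" "0 < c" "0 < d" "a + b + c + d = 1"
  shows "phiF a + ThF a b + ThF a c + ThF a d = 0"
proof -
  have q: "Q4 a b c d \<in> Pn 4" using Q4_in assms by blast
  have tf4: "tensor_field2 4 h" using tf by simp
  have "(\<Sum>y\<in>Omega 4. h 4 (Q4 a b c d) (ind 1) (ind y)) = 0" by (rule row_sum[OF tf4 q])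
  moreover have "h 4 (Q4 a b c d) (ind 1) (ind 1) = phiF a" using M2[of 4 "Q4 a b c d" 1] q by (simp add: Omega4 Q4_def)
  moreover have "h 4 (Q4 a b c d) (ind 1) (ind 2) = ThF a b" using M3[of 4 "Q4 a b c d" 1 2] q by (simp add: Omega4 Q4_def)
  moreover have "h 4 (Q4 a b c d) (ind 1) (ind 3) = ThF a c" using M3[of 4 "Q4 a b c d" 1 3] q by (simp add: Omega4 Q4_def)
  moreover have "h 4 (Q4 a b c d) (ind 1) (ind 4) = ThF a d" using M3[of 4 "Q4 a b c d" 1 4] q by (simp add: Omega4 Q4_def)
  ultimately show ?thesis by (simp add: Omega4 algebra_simps)
qed

lemma C4:
  assumes "0 < a" "0 < b" "0 < c" "0 < d" "a + b + c + d = 1"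
  shows "phiF a + ThF b a + ThF c a + ThF d a = 0"
proof -
  have q: "Q4 a b c d \<in> Pn 4" using Q4_in assms by blast
  have tf4: "tensor_field2 4 h" using tf by simp
  have "(\<Sum>y\<in>Omega 4. h 4 (Q4 a b c d) (ind y) (ind 1)) = 0" by (rule col_sum[OF tf4 q])
  moreover have "h 4 (Q4 a b c d) (ind 1) (ind 1) = phiF a" using M2[of 4 "Q4 a b c d" 1] q by (simp add: Omega4 Q4_def)
  moreover have "h 4 (Q4 a b c d) (ind 2) (ind 1) = ThF b a" using M3[of 4 "Q4 a b c d" 2 1] q by (simp add: Omega4 Q4_def)
  moreover have "h 4 (Q4 a b c d) (ind 3) (ind 1) = ThF c a" using M3[of 4 "Q4 a b c d" 3 1] q by (simp add: Omega4 Q4_def)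
  moreover have "h 4 (Q4 a b c d) (ind 4) (ind 1) = ThF d a" using M3[of 4 "Q4 a b c d" 4 1] q by (simp add: Omega4 Q4_def)
  ultimately show ?thesis by (simp add: Omega4 algebra_simps)
qed

lemma addR:
  assumes "0 < a" "0 < c" "0 < d" "a + c + d < 1"
  shows "ThF a (c + d) = ThF a c + ThF a d"
  using R4[of a "1 - a - c - d" c d] R3[of a "1 - a - c - d"] assms by (simp add: algebra_simps)

lemma addC:
  assumes "0 < a" "0 < c" "0 < d" "a + c + d < 1"
  shows "ThF (c + d) a = ThF c a + ThF d a"
  using C4[of a "1 - a - c - d" c d] C3[of a "1 - a - c - d"] assms by (simp add: algebra_simps)

lemma cont_h3: "continuous_on (Pn 3) (\<lambda>p. h 3 p (ind 1) (ind 2))"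
  using tf unfolding tensor_field2_def by simp

lemma contR:
  assumes "0 < a" "a < 1"
  shows "continuous_on {0<..<1-a} (ThF a)"
proof -
  have cp: "continuous_on {0<..<1-a} (\<lambda>b. P3 a b)"
    apply (rule continuous_on_coordinatewise_then_product)
    subgoal for i unfolding P3_def by (cases "i = 1"; cases "i = 2"; cases "i = 3") (auto intro!: continuous_intros)
    done
  have img: "(\<lambda>b. P3 a b) ` {0<..<1-a} \<subseteq> Pn 3" using assms P3_in by auto
  have "continuous_on {0<..<1-a} (\<lambda>b. h 3 (P3 a b) (ind 1) (ind 2))"
    by (rule continuous_on_compose2[OF cont_h3 cp img])
  then show ?thesis unfolding ThF_def by (simp add: fun_eq_iff)
qed

lemma contC:
  assumes "0 < b" "b < 1"
  shows "continuous_on {0<..<1-b} (\<lambda>a. ThF a b)"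
proof -
  have cp: "continuous_on {0<..<1-b} (\<lambda>a. P3 a b)"
    apply (rule continuous_on_coordinatewise_then_product)
    subgoal for i unfolding P3_def by (cases "i = 1"; cases "i = 2"; cases "i = 3") (auto intro!: continuous_intros)
    done
  have img: "(\<lambda>a. P3 a b) ` {0<..<1-b} \<subseteq> Pn 3" using assms P3_in by auto
  have "continuous_on {0<..<1-b} (\<lambda>a. h 3 (P3 a b) (ind 1) (ind 2))"
    by (rule continuous_on_compose2[OF cont_h3 cp img])
  then show ?thesis unfolding ThF_def by simp
qed

lemma linR:
  assumes "0 < a" "a < 1"
  shows "\<exists>k. \<forall>b\<in>{0<..<1-a}. ThF a b = k * b"
  by (rule cauchy[OF contR[OF assms]]) (rule addR, use assms in auto)

lemma linC:
  assumes "0 < b" "b < 1"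
  shows "\<exists>k. \<forall>a\<in>{0<..<1-b}. ThF a b = k * a"
proof (rule cauchy[OF contC[OF assms]])
  fix x y :: real assume "0 < x" "0 < y" "x + y < 1 - b"
  then show "ThF (x + y) b = ThF x b + ThF y b" using addC[of b x y] assms by simp
qed

definition beta :: real where "beta = 16 * ThF (1/4) (1/4)"

lemma ThF_formula:
  assumes a: "0 < a" and b: "0 < b" and ab: "a + b < 1"
  shows "ThF a b = beta * a * b"
proof -
  define t where "t = min (1/4) ((1-a)/2)"
  have t1: "t \<le> (1-a)/2" "t \<le> 1/4" unfolding t_def by (rule min.cobounded2, rule min.cobounded1)
  have t2: "0 < t" using a ab b by (auto simp: t_def)
  have t3: "t < 1 - a" using t1 t2 a ab b by (simp add: field_simps)
  have t: "0 < t" "t < 1 - a" "t \<le> 1/4" using t1 t2 t3 by auto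
  obtain k where k: "\<forall>b'\<in>{0<..<1-a}. ThF a b' = k * b'" using linR[of a] a ab b by auto
  obtain m where m: "\<forall>a'\<in>{0<..<1-t}. ThF a' t = m * a'" using linC[of t] t by auto
  obtain k' where k': "\<forall>b'\<in>{0<..<1-1/4}. ThF (1/4) b' = k' * b'" using linR[of "1/4"] by auto
  have e1: "ThF a b = k * b" using k a b ab by auto
  have e2: "ThF a t = k * t" using k t by auto
  have e3: "ThF a t = m * a" using m t a by auto
  have e4: "ThF (1/4) t = m * (1/4)" using m t by auto
  have e5: "ThF (1/4) t = k' * t" using k' t by auto
  have e6: "ThF (1/4) (1/4) = k' * (1/4)" using k' by auto
  have "k * t = 4 * a * (k' * t)" using e2 e3 e4 e5 by (simp add: field_simps)
  then have "k = 4 * a * k'" using t by simp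
  then show ?thesis using e1 e6 by (simp add: beta_def field_simps)
qed

lemma phiF_formula:
  assumes a: "0 < a" "a < 1"
  shows "phiF a = - beta * a * (1 - a)"
proof -
  define b where "b = (1 - a) / 2"
  have b: "0 < b" "a + b < 1" "0 < 1 - a - b" using a by (auto simp: b_def field_simps)
  have "phiF a = - ThF a b - ThF a (1 - a - b)" using R3[of a b] a b by simp
  also have "\<dots> = - beta * a * (1 - a)"
    using ThF_formula[of a b] ThF_formula[of a "1 - a - b"] a b by (simp add: algebra_simps)
  finally show ?thesis .
qed

lemma Pn_pos: "p \<in> Pn n \<Longrightarrow> x \<in> Omega n \<Longrightarrow> 0 < p x"
  by (simp add: Pn_def)

lemma Pn_sub: assumes p: "p \<in> Pn n" and S: "S \<subseteq> Omega n" shows "sum p S \<le> 1"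
proof -
  have "sum p S \<le> sum p (Omega n)"
    by (rule sum_mono2) (use p S in \<open>auto simp: Pn_def intro: less_imp_le\<close>)
  then show ?thesis using p by (simp add: Pn_def)
qed

lemma offdiag:
  assumes n: "2 \<le> n" and p: "p \<in> Pn n" and x: "x \<in> Omega n" and y: "y \<in> Omega n" and xy: "x \<noteq> y"
  shows "h n p (ind x) (ind y) = beta * p x * p y"
proof (cases "n = 2")
  case True
  have tf2: "tensor_field2 2 h" using tf by simp
  have O: "Omega n = {x, y}" using True x y xy by (auto simp: Omega2)
  have p2: "p \<in> Pn 2" using p True by simp
  have "(\<Sum>z\<in>Omega n. h n p (ind x) (ind z)) = 0" using row_sum[OF tf2 p2] True by simp
  then have r: "h n p (ind x) (ind x) + h n p (ind x) (ind y) = 0" using O xy by simp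
  have sx: "p x + p y = 1" using p O xy by (simp add: Pn_def)
  have py: "p y = 1 - p x" using sx by simp
  have hxx: "h n p (ind x) (ind x) = - beta * p x * (1 - p x)"
    using M2[OF n p x] phiF_formula[of "p x"] Pn_pos[OF p x] Pn_pos[OF p y] sx by simp
  have "h n p (ind x) (ind y) = - h n p (ind x) (ind x)" using r by simp
  then show ?thesis using hxx by (simp add: py algebra_simps)
next
  case False
  then have n3: "3 \<le> n" using n by simp
  obtain w where w: "w \<in> Omega n" "w \<noteq> x" "w \<noteq> y" using other_elem2[OF n3 x y] by blast
  have "{x, y, w} \<subseteq> Omega n" using x y w by auto
  from Pn_sub[OF p this] have "sum p {x, y, w} \<le> 1" .
  then have "p x + p y + p w \<le> 1" using xy w by simp
  then have lt: "p x + p y < 1" using Pn_pos[OF p w(1)] by simp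
  show ?thesis using M3[OF n3 p x y xy] ThF_formula[OF Pn_pos[OF p x] Pn_pos[OF p y] lt] by simp
qed

lemma diag:
  assumes n: "2 \<le> n" and p: "p \<in> Pn n" and x: "x \<in> Omega n"
  shows "h n p (ind x) (ind x) = beta * p x * p x - beta * p x"
proof -
  obtain w where w: "w \<in> Omega n" "w \<noteq> x" using other_elem[OF n x] by blast
  have "{x, w} \<subseteq> Omega n" using x w by auto
  from Pn_sub[OF p this] have "sum p {x, w} \<le> 1" .
  then have "p x + p w \<le> 1" using w by simp
  then have lt: "p x < 1" using Pn_pos[OF p w(1)] by simp
  show ?thesis using M2[OF n p x] phiF_formula[OF Pn_pos[OF p x] lt] by (simp add: algebra_simps)
qed

lemma final:
  assumes n: "2 \<le> n" and p: "p \<in> Pn n"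
  shows "h n p A B = (- beta) * fisher n p A B"
proof -
  have tfn: "tensor_field2 n h" using tf n by simp
  have H: "h n p (ind x) (ind y) = beta * p x * p y - (if x = y then beta * p x else 0)"
    if "x \<in> Omega n" "y \<in> Omega n" for x y
    using that diag[OF n p] offdiag[OF n p] by (cases "x = y") auto
  have "h n p A B = (\<Sum>x\<in>Omega n. \<Sum>y\<in>Omega n. A x * B y * h n p (ind x) (ind y))"
    by (rule tf_expand[OF tfn p])
  also have "\<dots> = (\<Sum>x\<in>Omega n. \<Sum>y\<in>Omega n. beta * (p x * A x) * (p y * B y)
                       - (if x = y then beta * p x * A x * B y else 0))"
    by (rule sum.cong[OF refl], rule sum.cong[OF refl]) (auto simp: H algebra_simps)
  also have "\<dots> = (\<Sum>x\<in>Omega n. \<Sum>y\<in>Omega n. beta * (p x * A x) * (p y * B y))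
                  - (\<Sum>x\<in>Omega n. beta * p x * A x * B x)"
    by (simp add: sum_subtractf sum.delta)
  also have "\<dots> = beta * ((\<Sum>x\<in>Omega n. p x * A x) * (\<Sum>y\<in>Omega n. p y * B y))
                  - beta * (\<Sum>x\<in>Omega n. p x * A x * B x)"
  proof -
    have sp: "(\<Sum>x\<in>Omega n. p x * A x) * (\<Sum>y\<in>Omega n. p y * B y)
        = (\<Sum>x\<in>Omega n. \<Sum>y\<in>Omega n. (p x * A x) * (p y * B y))" by (rule sum_product)
    show ?thesis unfolding sp by (simp add: sum_distrib_left mult.assoc)
  qed
  also have "\<dots> = (- beta) * fisher n p A B" by (simp add: fisher_def algebra_simps)
  finally show ?thesis .
qed

end



lemma det_channel:
  assumes ce: "markov_coembedding n m W" and m: "1 \<le> m"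
  shows "\<forall>x\<in>Omega n. \<exists>y0\<in>Omega m. \<forall>y\<in>Omega m. W y x = (if y = y0 then 1 else 0)"
proof -
  obtain V where ch1: "markov_channel n m W" and ch2: "markov_channel m n V"
    and comp: "\<forall>p\<in>Pn m. markov_map n m W (markov_map m n V p) = p"
    using ce unfolding markov_coembedding_def by blast
  define M where "M y y' = (\<Sum>x\<in>Omega n. W y x * V x y')" for y y'
  have E: "(\<Sum>y'\<in>Omega m. M y y' * p y') = p y" if p: "p \<in> Pn m" and y: "y \<in> Omega m" for p y
  proof -
    have "p y = markov_map n m W (markov_map m n V p) y" using comp p by simp
    also have "\<dots> = (\<Sum>x\<in>Omega n. W y x * (\<Sum>y'\<in>Omega m. V x y' * p y'))"
      using y by (simp add: markov_map_def)
    also have "\<dots> = (\<Sum>x\<in>Omega n. \<Sum>y'\<in>Omega m. W y x * V x y' * p y')"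
      by (simp add: sum_distrib_left mult.assoc)
    also have "\<dots> = (\<Sum>y'\<in>Omega m. \<Sum>x\<in>Omega n. W y x * V x y' * p y')" by (rule sum.swap)
    also have "\<dots> = (\<Sum>y'\<in>Omega m. M y y' * p y')" by (simp add: M_def sum_distrib_right)
    finally show ?thesis by simp
  qed
  have cardm: "card (Omega m) = m" "real m > 0" using m by (auto simp: Omega_def)
  define u where "u z = (if z \<in> Omega m then 1 / real m else 0)" for z
  have u: "u \<in> Pn m" using cardm by (auto simp: Pn_def u_def)
  have Mdelta: "M y y0 = (if y = y0 then 1 else 0)" if y: "y \<in> Omega m" and y0: "y0 \<in> Omega m" for y y0
  proof -
    define p where "p z = (if z \<in> Omega m then (if z = y0 then 1/2 else 0) + 1 / (2 * real m) else 0)" for z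
    have "(\<Sum>z\<in>Omega m. p z) = (\<Sum>z\<in>Omega m. (if z = y0 then 1/2 else 0)) + (\<Sum>z\<in>Omega m. 1 / (2 * real m))"
      unfolding p_def by (simp add: sum.distrib)
    also have "\<dots> = 1" using y0 cardm by simp
    finally have "sum p (Omega m) = 1" .
    then have pP: "p \<in> Pn m" using cardm by (auto simp: Pn_def p_def intro: add_nonneg_pos)
    have "p y = (\<Sum>y'\<in>Omega m. M y y' * p y')" using E[OF pP y] by simp
    also have "\<dots> = (\<Sum>y'\<in>Omega m. (if y' = y0 then M y y' / 2 else 0) + M y y' * u y' / 2)"
      by (rule sum.cong) (auto simp: p_def u_def field_simps)
    also have "\<dots> = M y y0 / 2 + (\<Sum>y'\<in>Omega m. M y y' * u y') / 2"
      using y0 by (simp add: sum.distrib sum_divide_distrib)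
    also have "\<dots> = M y y0 / 2 + u y / 2" using E[OF u y] by simp
    finally have "p y = M y y0 / 2 + u y / 2" .
    then show ?thesis using y by (auto simp: p_def u_def field_simps)
  qed
  show ?thesis
  proof
    fix x assume x: "x \<in> Omega n"
    obtain y0 where y0: "y0 \<in> Omega m" "V x y0 > 0" using ch2 x unfolding markov_channel_def by blast
    have Wnn: "\<forall>y\<in>Omega m. 0 \<le> W y x" and Ws: "(\<Sum>y\<in>Omega m. W y x) = 1"
      using ch1 x unfolding markov_channel_def by blast+
    have zero: "W y x = 0" if y: "y \<in> Omega m" "y \<noteq> y0" for y
    proof -
      have nn: "\<forall>x'\<in>Omega n. 0 \<le> W y x' * V x' y0"
        using ch1 ch2 y y0 unfolding markov_channel_def by (auto intro: mult_nonneg_nonneg)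
      have "M y y0 = 0" using Mdelta[OF y(1) y0(1)] y by simp
      then have "\<forall>x'\<in>Omega n. W y x' * V x' y0 = 0"
        using nn unfolding M_def by (simp add: sum_nonneg_eq_0_iff)
      then have "W y x * V x y0 = 0" using x by blast
      then show ?thesis using y0 by simp
    qed
    have "(\<Sum>y\<in>Omega m. W y x) = (\<Sum>y\<in>Omega m. if y = y0 then W y0 x else 0)"
      by (rule sum.cong) (auto simp: zero)
    then have "W y0 x = 1" using Ws y0 by simp
    then show "\<exists>y0\<in>Omega m. \<forall>y\<in>Omega m. W y x = (if y = y0 then 1 else 0)"
      using y0 zero by (intro bexI[of _ y0]) auto
  qed
qed

lemma push_sum:
  assumes det: "\<forall>x\<in>Omega n. g x \<in> Omega m \<and> (\<forall>y\<in>Omega m. W y x = (if y = g x then 1 else 0))"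
  shows "(\<Sum>y\<in>Omega m. markov_map n m W q y * F y) = (\<Sum>x\<in>Omega n. q x * F (g x))"
proof -
  have "(\<Sum>y\<in>Omega m. markov_map n m W q y * F y) = (\<Sum>y\<in>Omega m. \<Sum>x\<in>Omega n. W y x * q x * F y)"
    by (simp add: markov_map_def sum_distrib_right)
  also have "\<dots> = (\<Sum>x\<in>Omega n. \<Sum>y\<in>Omega m. W y x * q x * F y)" by (rule sum.swap)
  also have "\<dots> = (\<Sum>x\<in>Omega n. q x * F (g x))"
  proof (rule sum.cong[OF refl])
    fix x assume x: "x \<in> Omega n"
    have "(\<Sum>y\<in>Omega m. W y x * q x * F y) = (\<Sum>y\<in>Omega m. if y = g x then q x * F y else 0)"
      by (rule sum.cong) (use det x in auto)
    then show "(\<Sum>y\<in>Omega m. W y x * q x * F y) = q x * F (g x)" using det x by simp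
  qed
  finally show ?thesis .
qed

lemma forward:
  assumes ce: "markov_coembedding n m W" and m: "2 \<le> m" and q: "q \<in> Pn n"
    and hyp: "\<forall>n\<ge>2. \<forall>p\<in>Pn n. \<forall>A B. h n p A B = c * fisher n p A B" and mn: "m \<le> n"
  shows "h m (markov_map n m W q) A B = h n q (markov_pullback m W A) (markov_pullback m W B)"
proof -
  have d: "\<forall>x\<in>Omega n. \<exists>y0\<in>Omega m. \<forall>y\<in>Omega m. W y x = (if y = y0 then 1 else 0)"
    using det_channel[OF ce] m by simp
  define g where "g x = (SOME y0. y0 \<in> Omega m \<and> (\<forall>y\<in>Omega m. W y x = (if y = y0 then 1 else 0)))" for x
  have det: "\<forall>x\<in>Omega n. g x \<in> Omega m \<and> (\<forall>y\<in>Omega m. W y x = (if y = g x then 1 else 0))"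
  proof
    fix x assume "x \<in> Omega n"
    then have "\<exists>y0. y0 \<in> Omega m \<and> (\<forall>y\<in>Omega m. W y x = (if y = y0 then 1 else 0))" using d by blast
    then show "g x \<in> Omega m \<and> (\<forall>y\<in>Omega m. W y x = (if y = g x then 1 else 0))"
      unfolding g_def by (rule someI_ex)
  qed
  have ch1: "markov_channel n m W" using ce unfolding markov_coembedding_def by blast
  have pb: "markov_pullback m W A x = A (g x)" if x: "x \<in> Omega n" for A x
  proof -
    have "markov_pullback m W A x = (\<Sum>y\<in>Omega m. if y = g x then A y else 0)"
      unfolding markov_pullback_def by (rule sum.cong) (use det x in auto)
    then show ?thesis using det x by simp
  qed
  let ?r = "markov_map n m W q"
  have rP: "?r \<in> Pn m"
  proof -
    have pos: "0 < ?r y" if y: "y \<in> Omega m" for y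
    proof -
      obtain x where x: "x \<in> Omega n" "0 < W y x" using ch1 y unfolding markov_channel_def by blast
      have nn: "\<forall>x'\<in>Omega n. 0 \<le> W y x' * q x'"
        using ch1 q y unfolding markov_channel_def Pn_def by (auto intro: mult_nonneg_nonneg less_imp_le)
      have "0 < W y x * q x" using x q by (simp add: Pn_def)
      also have "\<dots> \<le> (\<Sum>x'\<in>Omega n. W y x' * q x')"
        by (rule member_le_sum) (use x nn in auto)
      finally show ?thesis using y by (simp add: markov_map_def)
    qed
    have "(\<Sum>y\<in>Omega m. ?r y * 1) = (\<Sum>x\<in>Omega n. q x * 1)" by (rule push_sum[OF det])
    then have "sum ?r (Omega m) = 1" using q by (simp add: Pn_def)
    then show ?thesis using pos by (auto simp: Pn_def markov_map_def)
  qed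
  have "h m ?r A B = c * fisher m ?r A B" using hyp m rP by blast
  also have "fisher m ?r A B = fisher n q (markov_pullback m W A) (markov_pullback m W B)"
  proof -
    have 1: "(\<Sum>y\<in>Omega m. ?r y * A y * B y) = (\<Sum>x\<in>Omega n. q x * markov_pullback m W A x * markov_pullback m W B x)"
      using push_sum[OF det, of q "\<lambda>y. A y * B y"] by (simp add: pb mult.assoc)
    have 2: "(\<Sum>y\<in>Omega m. ?r y * A y) = (\<Sum>x\<in>Omega n. q x * markov_pullback m W A x)"
      using push_sum[OF det, of q A] by (simp add: pb)
    have 3: "(\<Sum>y\<in>Omega m. ?r y * B y) = (\<Sum>x\<in>Omega n. q x * markov_pullback m W B x)"
      using push_sum[OF det, of q B] by (simp add: pb)
    show ?thesis unfolding fisher_def 1 2 3 ..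
  qed
  also have "c * fisher n q (markov_pullback m W A) (markov_pullback m W B) = h n q (markov_pullback m W A) (markov_pullback m W B)"
    using hyp m mn q by simp
  finally show ?thesis .
qed


theorem mainTheorem8:
  fixes h :: "nat \<Rightarrow> (nat \<Rightarrow> real) \<Rightarrow> (nat \<Rightarrow> real) \<Rightarrow> (nat \<Rightarrow> real) \<Rightarrow> real"
  assumes "\<forall>n\<ge>2. tensor_field2 n h"
  shows "(\<exists>c. \<forall>n\<ge>2. \<forall>p\<in>Pn n. \<forall>A B. h n p A B = c * fisher n p A B)
     \<longleftrightarrow>
     (\<forall>m n W. 2 \<le> m \<longrightarrow> m \<le> n \<longrightarrow> markov_coembedding n m W \<longrightarrow>
        (\<forall>q\<in>Pn n. \<forall>A B.
           h m (markov_map n m W q) A B = h n q (markov_pullback m W A) (markov_pullback m W B)))"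
proof
  assume "\<exists>c. \<forall>n\<ge>2. \<forall>p\<in>Pn n. \<forall>A B. h n p A B = c * fisher n p A B"
  then obtain c where hyp: "\<forall>n\<ge>2. \<forall>p\<in>Pn n. \<forall>A B. h n p A B = c * fisher n p A B" by blast
  show "\<forall>m n W. 2 \<le> m \<longrightarrow> m \<le> n \<longrightarrow> markov_coembedding n m W \<longrightarrow>
        (\<forall>q\<in>Pn n. \<forall>A B.
           h m (markov_map n m W q) A B = h n q (markov_pullback m W A) (markov_pullback m W B))"
    using forward[OF _ _ _ hyp] by blast
next
  assume inv: "\<forall>m n W. 2 \<le> m \<longrightarrow> m \<le> n \<longrightarrow> markov_coembedding n m W \<longrightarrow>
        (\<forall>q\<in>Pn n. \<forall>A B.
           h m (markov_map n m W q) A B = h n q (markov_pullback m W A) (markov_pullback m W B))"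
  show "\<exists>c. \<forall>n\<ge>2. \<forall>p\<in>Pn n. \<forall>A B. h n p A B = c * fisher n p A B"
    using final[OF assms inv] by blast
qed

end
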